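(* Let $f\in A[X]$ be monic with discriminant $\Delta=\mathrm{Res}_X(f,f')\neq 0$, $r=v(\Delta)$, and let $N>2r$ be an integer. Let $f_N\in (A/\pi^NA)[X]$ be the reduction of $f$ modulo $\pi^N$ and $S_N\subseteq A/\pi^NA$ its set of roots. Then the number of roots of $f$ in $K$ is at least $|S_N/\approx|$.
   Context: $K$ is a field complete with respect to a non-archimedean discrete valuation $v$, normalized by $v(\pi)=1$ for a uniformizer $\pi$ of the valuation ring $A=\{x\in K: v(x)\geq 0\}$; the residue field $A/\pi A$ is finite. The equivalence relation $\approx$ on $S_N$ is: $x\approx y$ iff either $N\leq r$ and $x=y$, or $N>r$ and $x\equiv y \pmod{\overline{\pi}^{\,r+1}}$, where $\overline{\pi}$ is the image of $\pi$ in $A/\pi^NA$. *)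

theory Defs
  imports "Subresultants.Resultant_Prelim" "HOL-Computational_Algebra.Polynomial"
begin

text \<open>A discrete valuation v on a field, given on nonzero elements (v 0 is irrelevant;
  "x has valuation at least n" is expressed by vge, which treats 0 as having valuation infinity).\<close>

definition vge :: "('k::field \<Rightarrow> int) \<Rightarrow> 'k \<Rightarrow> int \<Rightarrow> bool" where
  "vge v x n \<longleftrightarrow> x = 0 \<or> n \<le> v x"

definition valring :: "('k::field \<Rightarrow> int) \<Rightarrow> 'k set" where
  "valring v = {x. vge v x 0}"

definition normalized_discrete_valuation :: "('k::field \<Rightarrow> int) \<Rightarrow> 'k \<Rightarrow> bool" where
  "normalized_discrete_valuation v uf \<longleftrightarrow>
     (\<forall>x y. x \<noteq> 0 \<longrightarrow> y \<noteq> 0 \<longrightarrow> v (x * y) = v x + v y) \<and>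
     (\<forall>x y. x \<noteq> 0 \<longrightarrow> y \<noteq> 0 \<longrightarrow> x + y \<noteq> 0 \<longrightarrow> min (v x) (v y) \<le> v (x + y)) \<and>
     uf \<noteq> 0 \<and> v uf = 1"

definition valuation_complete :: "('k::field \<Rightarrow> int) \<Rightarrow> bool" where
  "valuation_complete v \<longleftrightarrow>
     (\<forall>s :: nat \<Rightarrow> 'k.
        (\<forall>n. \<exists>M. \<forall>i\<ge>M. \<forall>j\<ge>M. vge v (s i - s j) n) \<longrightarrow>
        (\<exists>L. \<forall>n. \<exists>M. \<forall>i\<ge>M. vge v (s i - L) n))"

definition congr_pi :: "('k::field \<Rightarrow> int) \<Rightarrow> nat \<Rightarrow> 'k rel" where
  "congr_pi v n = {(x, y). x \<in> valring v \<and> y \<in> valring v \<and> vge v (x - y) (int n)}"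

definition finite_residue_field :: "('k::field \<Rightarrow> int) \<Rightarrow> bool" where
  "finite_residue_field v \<longleftrightarrow> finite (valring v // congr_pi v 1)"

definition quot_ring :: "('k::field \<Rightarrow> int) \<Rightarrow> nat \<Rightarrow> 'k set set" where
  "quot_ring v N = valring v // congr_pi v N"

text \<open>S_N: roots of the reduction f_N of f in A / uf^N A, i.e. residue classes
  [x] (x \<in> A) with f(x) \<equiv> 0 mod uf^N (well defined since f has coefficients in A).\<close>
definition roots_mod :: "('k::field \<Rightarrow> int) \<Rightarrow> 'k poly \<Rightarrow> nat \<Rightarrow> 'k set set" where
  "roots_mod v f N = {C \<in> quot_ring v N. \<forall>x\<in>C. vge v (poly f x) (int N)}"

text \<open>The relation \<approx> on S_N: if N \<le> r equality, else congruence modulo the image of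
  uf^(r+1) in A/uf^N A, i.e. representatives differ by an element of uf^(r+1) A + uf^N A.\<close>
definition approx_rel :: "('k::field \<Rightarrow> int) \<Rightarrow> 'k \<Rightarrow> 'k poly \<Rightarrow> nat \<Rightarrow> nat \<Rightarrow> 'k set rel" where
  "approx_rel v uf f N r = {(C, D). C \<in> roots_mod v f N \<and> D \<in> roots_mod v f N \<and>
     ((N \<le> r \<and> C = D) \<or>
      (N > r \<and> (\<exists>x\<in>C. \<exists>y\<in>D. \<exists>a b. a \<in> valring v \<and> b \<in> valring v \<and>
                  x - y = uf ^ (r + 1) * a + uf ^ N * b)))}"

end

theory Submission
  imports Defs "Subresultants.Subresultant"
begin

locale dval =
  fixes v :: "'k::field \<Rightarrow> int" and uf :: 'k
  assumes ndv: "normalized_discrete_valuation v uf"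
begin

lemma vmult: "x \<noteq> 0 \<Longrightarrow> y \<noteq> 0 \<Longrightarrow> v (x * y) = v x + v y"
  using ndv unfolding normalized_discrete_valuation_def by blast

lemma vadd: "x \<noteq> 0 \<Longrightarrow> y \<noteq> 0 \<Longrightarrow> x + y \<noteq> 0 \<Longrightarrow> min (v x) (v y) \<le> v (x + y)"
  using ndv unfolding normalized_discrete_valuation_def by blast

lemma uf0: "uf \<noteq> 0" and vuf: "v uf = 1"
  using ndv unfolding normalized_discrete_valuation_def by blast+

lemma v1[simp]: "v 1 = 0"
  using vmult[of 1 1] by simp

lemma vneg1: "v (-1) = 0"
  using vmult[of "-1" "-1"] by simp

lemma vneg[simp]: "v (- x) = v x"
proof (cases "x = 0")
  case False
  then show ?thesis using vmult[of "-1" x] vneg1 by simp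
qed simp

lemma vge_0[simp]: "vge v 0 n" unfolding vge_def by simp

lemma vge_nz: "x \<noteq> 0 \<Longrightarrow> vge v x n \<longleftrightarrow> n \<le> v x" unfolding vge_def by simp

lemma vge_neg[simp]: "vge v (- x) n \<longleftrightarrow> vge v x n" unfolding vge_def by auto

lemma vge_mono: "vge v x n \<Longrightarrow> m \<le> n \<Longrightarrow> vge v x m" unfolding vge_def by auto

lemma vge_add: "vge v x n \<Longrightarrow> vge v y n \<Longrightarrow> vge v (x + y) n"
  unfolding vge_def using vadd[of x y] by fastforce

lemma vge_diff: "vge v x n \<Longrightarrow> vge v y n \<Longrightarrow> vge v (x - y) n"
  using vge_add[of x n "-y"] by simp

lemma vge_mult: assumes "vge v x n" "vge v y m" shows "vge v (x * y) (n + m)"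
  using assms proof (cases "x = 0 \<or> y = 0")
  case False
  then show ?thesis using vmult[of x y] assms unfolding vge_def by auto
qed (auto simp: vge_def)

lemma vge_all: "(\<And>n. vge v x n) \<Longrightarrow> x = 0"
  unfolding vge_def by (metis add1_zle_eq less_le_not_le)

lemma inA: "x \<in> valring v \<longleftrightarrow> vge v x 0" unfolding valring_def by simp

lemma A0[simp]: "0 \<in> valring v" and A1[simp]: "1 \<in> valring v"
  unfolding inA vge_def by auto

lemma A_add: "x \<in> valring v \<Longrightarrow> y \<in> valring v \<Longrightarrow> x + y \<in> valring v"
  unfolding inA by (rule vge_add)

lemma A_neg: "x \<in> valring v \<Longrightarrow> - x \<in> valring v"
  unfolding inA by simp

lemma A_diff: "x \<in> valring v \<Longrightarrow> y \<in> valring v \<Longrightarrow> x - y \<in> valring v"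
  unfolding inA by (rule vge_diff)

lemma A_mult: "x \<in> valring v \<Longrightarrow> y \<in> valring v \<Longrightarrow> x * y \<in> valring v"
  unfolding inA using vge_mult[of x 0 y 0] by simp

lemma A_of_nat: "of_nat n \<in> valring v"
  by (induction n) (auto intro: A_add)

lemma A_pow: "x \<in> valring v \<Longrightarrow> x ^ n \<in> valring v"
  by (induction n) (auto intro: A_mult)

lemma A_prod: "finite S \<Longrightarrow> (\<And>i. i \<in> S \<Longrightarrow> g i \<in> valring v) \<Longrightarrow> prod g S \<in> valring v"
  by (induction S rule: finite_induct) (auto intro: A_mult)

lemma vge_sum: "finite S \<Longrightarrow> (\<And>i. i \<in> S \<Longrightarrow> vge v (g i) n) \<Longrightarrow> vge v (sum g S) n"
  by (induction S rule: finite_induct) (auto intro: vge_add)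

lemma vge_A: "vge v x n \<Longrightarrow> 0 \<le> n \<Longrightarrow> x \<in> valring v"
  unfolding inA using vge_mono by blast

lemma v_ufpow: "uf ^ k \<noteq> 0 \<and> v (uf ^ k) = int k"
proof (induction k)
  case (Suc k)
  then show ?case using vmult[of uf "uf ^ k"] uf0 vuf by simp
qed simp

lemma vge_ufpow: "vge v (uf ^ k) (int k)"
  using v_ufpow[of k] unfolding vge_def by simp

lemma vge_factor:
  assumes "vge v x (int k)"
  shows "\<exists>a\<in>valring v. x = uf ^ k * a"
proof (cases "x = 0")
  case True then show ?thesis by (intro bexI[of _ 0]) auto
next
  case False
  define a where "a = x / uf ^ k"
  have pk: "uf ^ k \<noteq> 0" "v (uf ^ k) = int k" using v_ufpow by auto
  have xa: "x = uf ^ k * a" using pk by (simp add: a_def)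
  have a0: "a \<noteq> 0" using False xa by auto
  have "v x = int k + v a" using vmult[OF pk(1) a0] xa pk by simp
  then have "vge v a 0" using assms False unfolding vge_def by simp
  then show ?thesis using xa inA by blast
qed

lemma v_stable:
  assumes "x \<noteq> 0" "vge v y (v x + 1)"
  shows "x + y \<noteq> 0 \<and> v (x + y) = v x"
proof (cases "y = 0")
  case False
  have vy: "v y \<ge> v x + 1" using assms False unfolding vge_def by auto
  have ne: "x + y \<noteq> 0"
  proof
    assume "x + y = 0" then have "y = - x" by (metis add.commute eq_neg_iff_add_eq_0)
    then show False using vy by simp
  qed
  have ge: "v (x + y) \<ge> v x" using vadd[OF assms(1) False ne] vy by simp
  have "min (v (x + y)) (v (-y)) \<le> v ((x + y) + (- y))"
    using vadd[of "x+y" "-y"] ne False assms(1) by simp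
  then have "v (x + y) \<le> v x" using vy by auto
  then show ?thesis using ge ne by simp
qed (use assms in simp)

abbreviation Apoly :: "'k poly \<Rightarrow> bool" where
  "Apoly f \<equiv> \<forall>i. coeff f i \<in> valring v"

lemma poly_A: "Apoly f \<Longrightarrow> x \<in> valring v \<Longrightarrow> poly f x \<in> valring v"
proof (induction f rule: pCons_induct)
  case (pCons a p)
  have "Apoly p" using pCons.prems(1) by (metis coeff_pCons_Suc)
  moreover have "a \<in> valring v" using pCons.prems(1) by (metis coeff_pCons_0)
  ultimately show ?case using pCons by (auto intro: A_add A_mult)
qed simp

lemma pderiv_A: "Apoly f \<Longrightarrow> Apoly (pderiv f)"
  unfolding coeff_pderiv by (metis A_mult A_of_nat)

lemma taylor2:
  assumes "Apoly f" "x \<in> valring v" "h \<in> valring v"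
  shows "\<exists>G\<in>valring v. poly f (x + h) = poly f x + poly (pderiv f) x * h + h^2 * G"
  using assms(1)
proof (induction f rule: pCons_induct)
  case 0
  then show ?case by (intro bexI[of _ 0]) auto
next
  case (pCons a p)
  have pA: "Apoly p" using pCons.prems(1) by (metis coeff_pCons_Suc)
  then obtain G where G: "G \<in> valring v"
    "poly p (x + h) = poly p x + poly (pderiv p) x * h + h^2 * G"
    using pCons.IH by blast
  have dA: "poly (pderiv p) x \<in> valring v" using poly_A[OF pderiv_A[OF pA] assms(2)] .
  define G' where "G' = poly (pderiv p) x + x * G + h * G"
  have "G' \<in> valring v" unfolding G'_def using dA G(1) assms by (auto intro: A_add A_mult)
  moreover have "poly (pCons a p) (x + h) = a + (x + h) * (poly p x + poly (pderiv p) x * h + h^2 * G)"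
    by (simp only: poly_pCons G(2))
  moreover have "\<dots> = poly (pCons a p) x + poly (pderiv (pCons a p)) x * h + h^2 * G'"
    by (simp add: pderiv_pCons G'_def algebra_simps power2_eq_square)
  ultimately show ?case by metis
qed

lemma taylor1:
  assumes "Apoly f" "x \<in> valring v" "h \<in> valring v"
  shows "\<exists>G\<in>valring v. poly f (x + h) = poly f x + h * G"
proof -
  obtain G where G: "G \<in> valring v" "poly f (x + h) = poly f x + poly (pderiv f) x * h + h^2 * G"
    using taylor2[OF assms] by blast
  have "poly (pderiv f) x + h * G \<in> valring v"
    using poly_A[OF pderiv_A[OF assms(1)] assms(2)] G(1) assms(3) by (auto intro: A_add A_mult)
  moreover have "poly f (x + h) = poly f x + h * (poly (pderiv f) x + h * G)"
    using G(2) by (simp add: algebra_simps power2_eq_square)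
  ultimately show ?thesis by blast
qed

lemma newton_step:
  assumes fA: "Apoly f" and yA: "y \<in> valring v" and fy: "vge v (poly f y) M"
    and D0: "poly (pderiv f) y \<noteq> 0" and lt: "2 * v (poly (pderiv f) y) < M"
  defines "h \<equiv> - poly f y / poly (pderiv f) y"
  shows "h \<in> valring v \<and> vge v h (M - v (poly (pderiv f) y)) \<and> vge v (poly f (y + h)) (M + 1)
     \<and> poly (pderiv f) (y + h) \<noteq> 0 \<and> v (poly (pderiv f) (y + h)) = v (poly (pderiv f) y)"
proof -
  define D where "D = poly (pderiv f) y"
  define F where "F = poly f y"
  have DA: "D \<in> valring v" unfolding D_def using poly_A[OF pderiv_A[OF fA] yA] .
  have e0: "0 \<le> v D" using DA D0 unfolding inA vge_def D_def by auto
  have hD: "h * D = - F" unfolding h_def D_def F_def using D0 by simp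
  have vh: "vge v h (M - v D)"
  proof (cases "F = 0")
    case True then show ?thesis using hD D0 D_def by simp
  next
    case False
    have h0: "h \<noteq> 0" using hD False by auto
    have "v (h * D) = v h + v D" using vmult[OF h0] D0 D_def by simp
    then have "v h = v F - v D" using hD by simp
    moreover have "M \<le> v F" using fy False unfolding F_def vge_def by auto
    ultimately show ?thesis using h0 unfolding vge_def by simp
  qed
  have hA: "h \<in> valring v" using vge_A[OF vh] lt e0 D_def by simp
  obtain G where G: "G \<in> valring v" "poly f (y + h) = F + D * h + h^2 * G"
    using taylor2[OF fA yA hA] unfolding F_def D_def by blast
  have "poly f (y + h) = h * h * G" using G(2) hD by (simp add: algebra_simps power2_eq_square)
  then have "vge v (poly f (y + h)) ((M - v D) + (M - v D) + 0)"
    using vge_mult[OF vge_mult[OF vh vh], of G 0] G(1) inA by simp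
  then have f1: "vge v (poly f (y + h)) (M + 1)"
    by (rule vge_mono) (use lt D_def e0 in simp)
  obtain H where H: "H \<in> valring v" "poly (pderiv f) (y + h) = D + h * H"
    using taylor1[OF pderiv_A[OF fA] yA hA] unfolding D_def by blast
  have "vge v (h * H) ((M - v D) + 0)" using vge_mult[OF vh, of H 0] H(1) inA by simp
  then have "vge v (h * H) (v D + 1)" by (rule vge_mono) (use lt D_def in simp)
  then have "D + h * H \<noteq> 0 \<and> v (D + h * H) = v D" using v_stable D0 D_def by blast
  then show ?thesis using hA vh f1 H(2) D_def by simp
qed

lemma hensel:
  assumes fA: "Apoly f" and x0A: "x0 \<in> valring v" and fx0: "vge v (poly f x0) N"
    and D0: "poly (pderiv f) x0 \<noteq> 0" and lt: "2 * v (poly (pderiv f) x0) < N"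
    and comp: "valuation_complete v"
  shows "\<exists>L\<in>valring v. poly f L = 0 \<and> vge v (L - x0) (N - v (poly (pderiv f) x0))"
proof -
  define e where "e = v (poly (pderiv f) x0)"
  have e0: "0 \<le> e" using poly_A[OF pderiv_A[OF fA] x0A] D0 unfolding inA vge_def e_def by auto
  have N0: "0 < N" using lt e0 e_def by simp
  define step where "step y = y - poly f y / poly (pderiv f) y" for y
  define xs where "xs k = (step ^^ k) x0" for k
  have xs0: "xs 0 = x0" and xsS: "xs (Suc k) = step (xs k)" for k unfolding xs_def by simp_all
  have stepeq: "step y = y + (- poly f y / poly (pderiv f) y)" for y unfolding step_def by simp
  have inv: "xs k \<in> valring v \<and> vge v (poly f (xs k)) (N + int k) \<and> poly (pderiv f) (xs k) \<noteq> 0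
       \<and> v (poly (pderiv f) (xs k)) = e" for k
  proof (induction k)
    case 0 then show ?case using x0A fx0 D0 xs0 e_def by simp
  next
    case (Suc k)
    have lt': "2 * v (poly (pderiv f) (xs k)) < N + int k" using Suc lt e_def by simp
    note ns = newton_step[OF fA _ _ _ lt'] Suc
    have "xs k + (- (poly f (xs k) / poly (pderiv f) (xs k))) \<in> valring v"
      by (rule A_add) (use ns in auto)
    then have "xs (Suc k) \<in> valring v" unfolding xsS stepeq by simp
    then show ?case using ns unfolding xsS stepeq by (simp add: ac_simps)
  qed
  have dstep: "vge v (xs (Suc k) - xs k) (N + int k - e)" for k
  proof -
    have lt': "2 * v (poly (pderiv f) (xs k)) < N + int k" using inv[of k] lt e_def by simp
    note ns = newton_step[OF fA _ _ _ lt'] inv[of k]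
    show ?thesis using ns unfolding xsS stepeq by simp
  qed
  have dist: "vge v (xs j - xs i) (N - e + int i)" if "i \<le> j" for i j
    using that
  proof (induction j rule: dec_induct)
    case (step j)
    have "xs (Suc j) - xs i = (xs (Suc j) - xs j) + (xs j - xs i)" by simp
    moreover have "vge v (xs (Suc j) - xs j) (N - e + int i)"
      using dstep[of j] by (rule vge_mono) (use step in simp)
    ultimately show ?case using vge_add step by metis
  qed simp
  have cauchy: "\<forall>n. \<exists>M. \<forall>i\<ge>M. \<forall>j\<ge>M. vge v (xs i - xs j) n"
  proof
    fix n
    show "\<exists>M. \<forall>i\<ge>M. \<forall>j\<ge>M. vge v (xs i - xs j) n"
    proof (intro exI allI impI)
      fix i j assume ij: "nat (n - (N - e)) \<le> i" "nat (n - (N - e)) \<le> j"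
      show "vge v (xs i - xs j) n"
      proof (cases "i \<le> j")
        case True
        have "vge v (xs j - xs i) n" using dist[OF True] by (rule vge_mono) (use ij in simp)
        then show ?thesis using vge_neg[of "xs i - xs j"] by simp
      next
        case False
        show ?thesis using dist[of j i] False by (rule_tac vge_mono) (use ij in auto)
      qed
    qed
  qed
  obtain L where L: "\<forall>n. \<exists>M. \<forall>i\<ge>M. vge v (xs i - L) n"
    using comp cauchy unfolding valuation_complete_def by blast
  obtain M0 where M0: "\<forall>i\<ge>M0. vge v (xs i - L) 0" using L by blast
  have LA: "L \<in> valring v"
  proof -
    have "xs M0 - L \<in> valring v" using M0 inA by blast
    then have "xs M0 - (xs M0 - L) \<in> valring v" using inv[of M0] A_diff by blast
    then show ?thesis by simp
  qed
  have fL: "poly f L = 0"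
  proof (rule vge_all)
    fix n :: int
    have "vge v (poly f L) (max n 0)"
    proof -
      obtain M where M: "\<forall>i\<ge>M. vge v (xs i - L) (max n 0)" using L by blast
      define i where "i = max M (nat (max n 0))"
      have d: "vge v (L - xs i) (max n 0)" using M i_def vge_neg[of "xs i - L"] by simp
      have dA: "L - xs i \<in> valring v" using vge_A[OF d] by simp
      obtain G where G: "G \<in> valring v" "poly f (xs i + (L - xs i)) = poly f (xs i) + (L - xs i) * G"
        using taylor1[OF fA _ dA, of "xs i"] inv[of i] by blast
      have "vge v (poly f (xs i)) (max n 0)" using inv[of i] by (rule_tac vge_mono) (use N0 in \<open>auto simp: i_def\<close>)
      moreover have "vge v ((L - xs i) * G) (max n 0 + 0)" using vge_mult[OF d] G(1) inA by blast
      ultimately show ?thesis using G(2) vge_add by fastforce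
    qed
    then show "vge v (poly f L) n" by (rule vge_mono) simp
  qed
  have "vge v (L - x0) (N - e)"
  proof -
    obtain M where M: "\<forall>i\<ge>M. vge v (xs i - L) (N - e)" using L by blast
    have "L - x0 = (xs M - x0) - (xs M - L)" by simp
    moreover have "vge v (xs M - x0) (N - e)" using dist[of 0 M] xs0 by simp
    moreover have "vge v (xs M - L) (N - e)" using M by simp
    ultimately show ?thesis using vge_diff by metis
  qed
  then show ?thesis using LA fL e_def by blast
qed

lemma disc:
  assumes fA: "Apoly f" and gA: "Apoly g" and deg: "0 < degree f + degree g"
    and xA: "x \<in> valring v" and fx: "vge v (poly f x) m" and gx: "vge v (poly g x) m"
  shows "vge v (resultant f g) m"
proof -
  define M where "M = subresultant_mat 0 f g"
  define n where "n = degree f + degree g"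
  have "dim_row M = n" "dim_col M = n" unfolding M_def n_def
    using subresultant_mat_dim[of 0 f g] by simp_all
  then have Mc: "M \<in> carrier_mat n n" by (rule carrier_matI)
  have "resultant f g = poly (subresultant 0 f g) x" by (simp add: subresultant_resultant)
  also have "\<dots> = poly (det M) x" by (simp add: subresultant_def M_def)
  also have "\<dots> = (\<Sum>p \<in> {p. p permutes {0..<n}}. poly (signof p) x * (\<Prod>i = 0..<n. poly (M $$ (i, p i)) x))"
    unfolding det_def'[OF Mc] by (simp add: poly_sum poly_prod)
  finally have eq: "resultant f g = \<dots>" .
  have entry: "poly (M $$ (i,j)) x \<in> valring v \<and> (i = n - 1 \<longrightarrow> vge v (poly (M $$ (i,j)) x) m)"
    if ij: "i < n" "j < n" for i j
  proof -
    have cA: "coeff_int h k \<in> valring v" if "Apoly h" for h k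
      using that unfolding coeff_int_def by simp
    have fxA: "poly f x \<in> valring v" "poly g x \<in> valring v" using poly_A fA gA xA by auto
    have mA: "x ^ k * poly h x \<in> valring v" if "poly h x \<in> valring v" for h k
      using that A_mult A_pow xA by blast
    have mI: "vge v (x ^ k * poly h x) m" if "vge v (poly h x) m" for h k
      using vge_mult[of "x ^ k" 0 "poly h x" m] that A_pow[OF xA] inA by simp
    have Mij: "M $$ (i,j) = (if j < degree g then
       if i = n - 1 then monom 1 (degree g - 1 - j) * f else [: coeff_int f (degree f - int i + int j) :]
      else if i = n - 1 then monom 1 (degree f - 1 - (j - degree g)) * g
        else [: coeff_int g (degree g - int i + int (j - degree g)) :])"
      using subresultant_index_mat[where F=f and G=g and J=0 and i=i and j=j] ij unfolding M_def n_def Let_def by simp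
    show ?thesis
      unfolding Mij using fxA by (auto simp: poly_monom intro!: cA fA gA mA mI fx gx)
  qed
  show ?thesis unfolding eq
  proof (rule vge_sum)
    fix p assume "p \<in> {p. p permutes {0..<n}}"
    then have pp: "p permutes {0..<n}" by simp
    have pin: "p i < n" if "i < n" for i using permutes_in_image[OF pp, of i] that by simp
    have n1: "n - 1 \<in> {0..<n}" using deg n_def by simp
    have peq: "(\<Prod>i = 0..<n. poly (M $$ (i, p i)) x) =
          poly (M $$ (n - 1, p (n - 1))) x * (\<Prod>i \<in> {0..<n} - {n - 1}. poly (M $$ (i, p i)) x)"
      using prod.remove[OF _ n1, of "\<lambda>i. poly (M $$ (i, p i)) x"] by simp
    have p1: "vge v (poly (M $$ (n - 1, p (n - 1))) x) m"
      using entry[of "n - 1" "p (n - 1)"] pin n1 by simp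
    have p2: "(\<Prod>i \<in> {0..<n} - {n - 1}. poly (M $$ (i, p i)) x) \<in> valring v"
      by (rule A_prod) (use entry pin in auto)
    have pr: "vge v (\<Prod>i = 0..<n. poly (M $$ (i, p i)) x) (m + 0)"
      unfolding peq by (rule vge_mult[OF p1 p2[unfolded inA]])
    have sA: "poly (signof p) x \<in> valring v"
      by (simp add: sign_def A_neg)
    show "vge v (poly (signof p) x * (\<Prod>i = 0..<n. poly (M $$ (i, p i)) x)) m"
      using vge_mult[OF sA[unfolded inA] pr] by simp
  qed (simp add: finite_permutations)
qed

end


theorem lemma3p8:
  fixes v :: "'k::field \<Rightarrow> int" and uf :: 'k and f :: "'k poly" and N :: nat
  assumes "normalized_discrete_valuation v uf"
    and "valuation_complete v"
    and "finite_residue_field v"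
    and "\<forall>i. coeff f i \<in> valring v"
    and "lead_coeff f = 1"
    and "resultant f (pderiv f) \<noteq> 0"
    and "int N > 2 * v (resultant f (pderiv f))"
  shows "card {x. poly f x = 0} \<ge>
         card (roots_mod v f N // approx_rel v uf f N (nat (v (resultant f (pderiv f)))))"
proof -
  interpret dval v uf using assms(1) by unfold_locales
  define \<Delta> where "\<Delta> = resultant f (pderiv f)"
  define r where "r = nat (v \<Delta>)"
  define R where "R = roots_mod v f N"
  define Q where "Q = approx_rel v uf f N r"
  define cg where "cg = congr_pi v N"
  define cls where "cls x = cg `` {x}" for x
  have fA: "Apoly f" using assms(4) by simp
  have f0: "f \<noteq> 0" using assms(5) by auto
  have \<Delta>0: "\<Delta> \<noteq> 0" using assms(6) \<Delta>_def by simp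
  have Nlt: "2 * v \<Delta> < int N" using assms(7) \<Delta>_def by simp
  have finR: "finite {x. poly f x = 0}" by (rule poly_roots_finite[OF f0])
  have cls_mem: "y \<in> cls x \<longleftrightarrow> x \<in> valring v \<and> y \<in> valring v \<and> vge v (x - y) (int N)" for x y
    unfolding cls_def cg_def congr_pi_def by auto
  have qr: "C \<in> quot_ring v N \<longleftrightarrow> (\<exists>x\<in>valring v. C = cls x)" for C
    unfolding quot_ring_def cls_def cg_def quotient_def by auto
  have in_cls: "x \<in> valring v \<Longrightarrow> x \<in> cls x" for x unfolding cls_mem by simp
  have same: "x \<in> valring v \<and> vge v (x - y) (int N)" if hyp: "C \<in> quot_ring v N" "x \<in> C" "y \<in> C" for C x y
  proof -
    obtain c where c: "c \<in> valring v" "C = cls c" using hyp(1) qr[of C] by auto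
    have "vge v (c - x) (int N)" "vge v (c - y) (int N)" "x \<in> valring v"
      using hyp c cls_mem by auto
    moreover have "x - y = (c - y) - (c - x)" by simp
    ultimately show ?thesis using vge_diff by metis
  qed
  show ?thesis
  proof (cases "degree f = 0")
    case True
    then have f1: "f = 1" using assms(5) by (metis coeff_pCons_0 lead_coeff_pCons(1) one_pCons pCons_cases degree_0_id)
    have "R = {}"
    proof (rule ccontr)
      assume "R \<noteq> {}"
      then obtain C where C: "C \<in> R" by blast
      then obtain c where c: "c \<in> valring v" "C = cls c" unfolding R_def roots_mod_def qr by blast
      then have "vge v (poly f c) (int N)" using C in_cls unfolding R_def roots_mod_def by blast
      moreover have "v \<Delta> = 0" unfolding \<Delta>_def f1 by simp
      ultimately show False using f1 Nlt unfolding vge_def by simp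
    qed
    then show ?thesis unfolding R_def[symmetric] Q_def[symmetric] r_def[symmetric] \<Delta>_def[symmetric] by simp
  next
    case False
    have dA: "Apoly (pderiv f)" using pderiv_A[OF fA] .
    have deg: "0 < degree f + degree (pderiv f)" using False by simp
    have "vge v \<Delta> 0" unfolding \<Delta>_def
      by (rule disc[OF fA dA deg A0]) (use poly_A[OF fA A0] poly_A[OF dA A0] inA in auto)
    then have vD0: "0 \<le> v \<Delta>" using \<Delta>0 unfolding vge_def by simp
    then have rD: "int r = v \<Delta>" unfolding r_def by simp
    have Nr: "r < N" using Nlt vD0 rD by simp
    have Qchar: "(C, D) \<in> Q \<longleftrightarrow> C \<in> R \<and> D \<in> R \<and> (\<exists>x\<in>C. \<exists>y\<in>D. vge v (x - y) (int r + 1))" for C D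
    proof
      assume "(C, D) \<in> Q"
      then obtain x y a b where h: "C \<in> R" "D \<in> R" "x \<in> C" "y \<in> D" "a \<in> valring v" "b \<in> valring v"
        "x - y = uf ^ (r + 1) * a + uf ^ N * b"
        using Nr unfolding Q_def approx_rel_def R_def by auto
      have "vge v (uf ^ (r + 1) * a) (int (r + 1) + 0)" using vge_mult[OF vge_ufpow] h inA by blast
      then have 1: "vge v (uf ^ (r + 1) * a) (int r + 1)" by (simp add: add.commute)
      have "vge v (uf ^ N * b) (int N + 0)" using vge_mult[OF vge_ufpow] h inA by blast
      then have 2: "vge v (uf ^ N * b) (int r + 1)" by (rule vge_mono) (use Nr in simp)
      show "C \<in> R \<and> D \<in> R \<and> (\<exists>x\<in>C. \<exists>y\<in>D. vge v (x - y) (int r + 1))"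
        using h vge_add[OF 1 2] by metis
    next
      assume h: "C \<in> R \<and> D \<in> R \<and> (\<exists>x\<in>C. \<exists>y\<in>D. vge v (x - y) (int r + 1))"
      then obtain x y where xy: "x \<in> C" "y \<in> D" "vge v (x - y) (int (r + 1))"
        by (auto simp: add.commute)
      obtain a where a: "a \<in> valring v" "x - y = uf ^ (r + 1) * a" using vge_factor[OF xy(3)] by blast
      have e: "x - y = uf ^ (r + 1) * a + uf ^ N * 0" using a by simp
      have ex: "\<exists>x\<in>C. \<exists>y\<in>D. \<exists>a b. a \<in> valring v \<and> b \<in> valring v \<and> x - y = uf ^ (r + 1) * a + uf ^ N * b"
        using xy(1,2) a(1) A0 e by blast
      show "(C, D) \<in> Q" unfolding Q_def approx_rel_def using h ex Nr unfolding R_def by blast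
    qed
    have inR: "C \<in> quot_ring v N" if "C \<in> R" for C using that unfolding R_def roots_mod_def by auto
    have close: "vge v (x - x') (int r + 1)" if "C \<in> R" "x \<in> C" "x' \<in> C" for C x x'
      using same[OF inR[OF that(1)] that(2,3)] by (rule_tac vge_mono) (use Nr in auto)
    have Qtrans: "Q `` {C} = Q `` {D}" if "(C, D) \<in> Q" for C D
    proof -
      have hQ: "(C, D) \<in> Q" by (rule that)
      obtain x y where xy: "C \<in> R" "D \<in> R" "x \<in> C" "y \<in> D" "vge v (x - y) (int r + 1)"
        using hQ Qchar by blast
      have "(C, E) \<in> Q \<longleftrightarrow> (D, E) \<in> Q" for E
      proof
        assume "(C, E) \<in> Q"
        then obtain x' z where h: "E \<in> R" "x' \<in> C" "z \<in> E" "vge v (x' - z) (int r + 1)" using Qchar by blast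
        have "y - z = (x' - z) - (x - y) - (x' - x)" by simp
        moreover have "vge v (y - z) (int r + 1)" using close[OF xy(1) h(2) xy(3)] h(4) xy(5)
          calculation vge_diff by metis
        ultimately show "(D, E) \<in> Q" using Qchar xy h by blast
      next
        assume "(D, E) \<in> Q"
        then obtain y' z where h: "E \<in> R" "y' \<in> D" "z \<in> E" "vge v (y' - z) (int r + 1)" using Qchar by blast
        have "x - z = (x - y) + (y - y') + (y' - z)" by simp
        moreover have "vge v (x - z) (int r + 1)" using close[OF xy(2) xy(4) h(2)] h(4) xy(5)
          calculation vge_add by metis
        ultimately show "(C, E) \<in> Q" using Qchar xy h by blast
      qed
      then show ?thesis by auto
    qed
    have key: "\<exists>L. poly f L = 0 \<and> (C, cls L) \<in> Q" if C: "C \<in> R" for C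
    proof -
      obtain x0 where x0: "x0 \<in> valring v" "C = cls x0" using inR[OF C] qr by blast
      have fx0: "vge v (poly f x0) (int N)" using C x0 in_cls unfolding R_def roots_mod_def by blast
      have D: "poly (pderiv f) x0 \<noteq> 0 \<and> v (poly (pderiv f) x0) \<le> v \<Delta>"
      proof (rule ccontr)
        assume "\<not> ?thesis"
        then have 1: "vge v (poly (pderiv f) x0) (v \<Delta> + 1)" unfolding vge_def by auto
        have 2: "vge v (poly f x0) (v \<Delta> + 1)" using fx0 by (rule vge_mono) (use Nlt vD0 in simp)
        have "vge v (resultant f (pderiv f)) (v \<Delta> + 1)" by (rule disc[OF fA dA deg x0(1) 2 1])
        then show False using \<Delta>0 unfolding vge_def \<Delta>_def by simp
      qed
      obtain L where L: "L \<in> valring v" "poly f L = 0" "vge v (L - x0) (int N - v (poly (pderiv f) x0))"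
        using hensel[OF fA x0(1) fx0] D Nlt assms(2) by fastforce
      have Lx: "vge v (x0 - L) (int r + 1)" using L(3) vge_neg[of "L - x0"]
        by (rule_tac vge_mono) (use D Nlt rD in auto)
      have clsR: "cls L \<in> R" unfolding R_def roots_mod_def
      proof (intro CollectI conjI ballI)
        show "cls L \<in> quot_ring v N" using qr L(1) by blast
        fix y assume "y \<in> cls L"
        then have y: "y \<in> valring v" "vge v (L - y) (int N)" using cls_mem by auto
        have yL: "y - L \<in> valring v" using y L(1) A_diff by blast
        obtain G where G: "G \<in> valring v" "poly f (L + (y - L)) = poly f L + (y - L) * G"
          using taylor1[OF fA L(1) yL] by blast
        have "vge v ((y - L) * G) (int N + 0)"
          using vge_mult[of "y - L" "int N" G 0] y(2) vge_neg[of "L - y"] G(1) inA by simp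
        then show "vge v (poly f y) (int N)" using G(2) L(2) by simp
      qed
      have "(C, cls L) \<in> Q" unfolding Qchar using C clsR Lx x0 in_cls L(1) by blast
      then show ?thesis using L(2) by blast
    qed
    have sub: "R // Q \<subseteq> (\<lambda>L. Q `` {cls L}) ` {x. poly f x = 0}"
    proof
      fix X assume "X \<in> R // Q"
      then obtain C where C: "C \<in> R" "X = Q `` {C}" by (auto elim: quotientE)
      obtain L where "poly f L = 0" "(C, cls L) \<in> Q" using key[OF C(1)] by blast
      then show "X \<in> (\<lambda>L. Q `` {cls L}) ` {x. poly f x = 0}" using Qtrans C(2) by blast
    qed
    have "card (R // Q) \<le> card ((\<lambda>L. Q `` {cls L}) ` {x. poly f x = 0})"
      by (rule card_mono[OF finite_imageI[OF finR] sub])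
    also have "\<dots> \<le> card {x. poly f x = 0}" by (rule card_image_le[OF finR])
    finally show ?thesis unfolding R_def Q_def r_def \<Delta>_def .
  qed
qed

end
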